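(* Let $\rho_1$ be a path in a higraph and $k\ge1$. Given a $k$-tuple $(e^1_1,\dots,e^k_1)$ of distinct breaks of $\rho_1$, define recursively for $j=2,\dots,k$: $\rho_j=q(\rho_{j-1},e^{j-1}_{j-1})$ and $e^i_j=\pi(e^i_{j-1})$ for $j\le i\le k$, where $\pi$ is the bijection induced by the gluing $\rho_{j-1}\mapsto\rho_j$. Then the map $(e^1_1,e^2_1,\dots,e^k_1)\mapsto(e^1_1,e^2_2,\dots,e^k_k)$ is a bijection from the set of $k$-tuples of distinct breaks of $\rho_1$ to the set of $k$-step gluing sequences on $\rho_1$. Furthermore, if two $k$-tuples differ by a permutation, then the corresponding $k$-step gluing sequences terminate in the same path $\rho_{k+1}$.
   Context: A directed hypergraph $\mathcal H=(\mathcal V,\mathcal E)$ has edges $\varepsilon=(I,J)\in2^{\mathcal V}\times2^{\mathcal V}$, source $I$, target $J$. It is a higraph if for all edges $\varepsilon,\varepsilon'$: (Transitive) if $t(\varepsilon)\cap s(\varepsilon')\ne\emptyset$ then it equals $\{K\}$ for one vertex $K$, the unions $s(\varepsilon)\cup(s(\varepsilon')\setminus\{K\})$ and $(t(\varepsilon)\setminus\{K\})\cup t(\varepsilon')$ are disjoint unions and their pair is an edge; (Acyclic) if $t(\varepsilon)\cap s(\varepsilon')$ and $t(\varepsilon')\cap s(\varepsilon)$ are both non-empty then $\varepsilon=\varepsilon'=(\{K\},\{K\})$. A path is a non-empty finite directed tree $T=(V,E)$ (nodes; arrows, called breaks) with $\rho:V\to\mathcal E$ such that for each arrow $e$, $t(\rho(s(e)))\cap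 s(\rho(t(e)))$ is a single vertex $\rho(e)$, and distinct arrows with common source node or common target node have distinct $\rho(e)$; label-compatible tree isomorphisms identify paths. For a subpath $\rho'$, $s(\rho')=\bigcup_v(s(\rho'(v))\setminus\{\rho'(e):t(e)=v\})$, $t(\rho')=\bigcup_v(t(\rho'(v))\setminus\{\rho'(e):s(e)=v\})$. Gluing at a break $e$: $q(\rho,e)$ has tree obtained by contracting the arrow $e$ to a node $v^*$ (other arrows kept), labels unchanged away from $v^*$, $\rho(v^* )=(s(\rho'),t(\rho'))$ with $\rho'$ the subpath on the endpoints of $e$. This contraction induces a bijection $\pi$ from the arrows of the old tree other than $e$ to the arrows of the new tree. A $k$-step gluing sequence on $\rho_1$ is $(e_1,\dots,e_k)$ with $e_i$ a break of $\rho_i$ and $\rho_{i+1}=q(\rho_i,e_i)$, identified up to isomorphisms of the corresponding paths identifying corresponding breaks. *)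

theory Defs
  imports Main "HOL-Combinatorics.Permutations"
begin

type_synonym 'v hedge = "'v set \<times> 'v set"

definition higraph :: "'v set \<Rightarrow> 'v hedge set \<Rightarrow> bool" where
  "higraph V E \<longleftrightarrow> E \<subseteq> Pow V \<times> Pow V \<and>
     (\<forall>\<epsilon>\<in>E. \<forall>\<epsilon>'\<in>E.
        (snd \<epsilon> \<inter> fst \<epsilon>' \<noteq> {} \<longrightarrow>
           (\<exists>K. snd \<epsilon> \<inter> fst \<epsilon>' = {K}
              \<and> fst \<epsilon> \<inter> (fst \<epsilon>' - {K}) = {}
              \<and> (snd \<epsilon> - {K}) \<inter> snd \<epsilon>' = {}
              \<and> (fst \<epsilon> \<union> (fst \<epsilon>' - {K}), (snd \<epsilon> - {K}) \<union> snd \<epsilon>') \<in> E))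
      \<and> (snd \<epsilon> \<inter> fst \<epsilon>' \<noteq> {} \<and> snd \<epsilon>' \<inter> fst \<epsilon> \<noteq> {} \<longrightarrow>
           (\<exists>K. \<epsilon> = ({K},{K}) \<and> \<epsilon>' = ({K},{K}))))"

text \<open>A labelled directed tree: nodes, arrows (breaks), source/target of arrows,
  node labels (hyperedges) and arrow labels (vertices).\<close>
record ('v,'n,'a) hpath =
  Nodes :: "'n set"
  Arrows :: "'a set"
  asrc :: "'a \<Rightarrow> 'n"
  atgt :: "'a \<Rightarrow> 'n"
  nlab :: "'n \<Rightarrow> 'v hedge"
  alab :: "'a \<Rightarrow> 'v"

definition undir_rel :: "('v,'n,'a) hpath \<Rightarrow> ('n \<times> 'n) set" where
  "undir_rel T = {(asrc T a, atgt T a) | a. a \<in> Arrows T} \<union> {(atgt T a, asrc T a) | a. a \<in> Arrows T}"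

definition is_dtree :: "('v,'n,'a) hpath \<Rightarrow> bool" where
  "is_dtree T \<longleftrightarrow> finite (Nodes T) \<and> Nodes T \<noteq> {} \<and> finite (Arrows T)
     \<and> (\<forall>a\<in>Arrows T. asrc T a \<in> Nodes T \<and> atgt T a \<in> Nodes T)
     \<and> card (Arrows T) + 1 = card (Nodes T)
     \<and> (\<forall>x\<in>Nodes T. \<forall>y\<in>Nodes T. (x, y) \<in> (undir_rel T)\<^sup>*)"

definition is_path :: "'v hedge set \<Rightarrow> ('v,'n,'a) hpath \<Rightarrow> bool" where
  "is_path E T \<longleftrightarrow> is_dtree T
     \<and> (\<forall>v\<in>Nodes T. nlab T v \<in> E)
     \<and> (\<forall>a\<in>Arrows T. snd (nlab T (asrc T a)) \<inter> fst (nlab T (atgt T a)) = {alab T a})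
     \<and> (\<forall>a\<in>Arrows T. \<forall>b\<in>Arrows T. a \<noteq> b \<and> asrc T a = asrc T b \<longrightarrow> alab T a \<noteq> alab T b)
     \<and> (\<forall>a\<in>Arrows T. \<forall>b\<in>Arrows T. a \<noteq> b \<and> atgt T a = atgt T b \<longrightarrow> alab T a \<noteq> alab T b)"

definition sub_arrows :: "('v,'n,'a) hpath \<Rightarrow> 'n set \<Rightarrow> 'a set" where
  "sub_arrows T S = {a \<in> Arrows T. asrc T a \<in> S \<and> atgt T a \<in> S}"

definition sub_src :: "('v,'n,'a) hpath \<Rightarrow> 'n set \<Rightarrow> 'v set" where
  "sub_src T S = (\<Union>v\<in>S. fst (nlab T v) - {alab T a | a. a \<in> sub_arrows T S \<and> atgt T a = v})"

definition sub_tgt :: "('v,'n,'a) hpath \<Rightarrow> 'n set \<Rightarrow> 'v set" where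
  "sub_tgt T S = (\<Union>v\<in>S. snd (nlab T v) - {alab T a | a. a \<in> sub_arrows T S \<and> asrc T a = v})"

text \<open>Gluing at break e: the arrow e is contracted; the contracted node v* is
  represented by the node asrc e (the node atgt e is removed, arrows incident to it
  are redirected to asrc e).\<close>
definition glue :: "('v,'n,'a) hpath \<Rightarrow> 'a \<Rightarrow> ('v,'n,'a) hpath" where
  "glue T e = (let u = asrc T e; w = atgt T e; S = {u, w} in
     \<lparr> Nodes = Nodes T - {w},
       Arrows = Arrows T - {e},
       asrc = (\<lambda>a. if asrc T a = w then u else asrc T a),
       atgt = (\<lambda>a. if atgt T a = w then u else atgt T a),
       nlab = (nlab T)(u := (sub_src T S, sub_tgt T S)),
       alab = alab T \<rparr>)"

text \<open>The bijection pi from arrows of T other than e to arrows of glue T e induced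
  by the contraction (in this representation arrows keep their identity).\<close>
definition glue_pi :: "('v,'n,'a) hpath \<Rightarrow> 'a \<Rightarrow> 'a \<Rightarrow> 'a" where
  "glue_pi T e a = a"

definition path_iso :: "('v,'n,'a) hpath \<Rightarrow> ('v,'m,'b) hpath \<Rightarrow> ('n \<Rightarrow> 'm) \<Rightarrow> ('a \<Rightarrow> 'b) \<Rightarrow> bool" where
  "path_iso T T' \<phi> \<psi> \<longleftrightarrow> bij_betw \<phi> (Nodes T) (Nodes T') \<and> bij_betw \<psi> (Arrows T) (Arrows T')
     \<and> (\<forall>a\<in>Arrows T. asrc T' (\<psi> a) = \<phi> (asrc T a) \<and> atgt T' (\<psi> a) = \<phi> (atgt T a)
                      \<and> alab T' (\<psi> a) = alab T a)
     \<and> (\<forall>v\<in>Nodes T. nlab T' (\<phi> v) = nlab T v)"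

definition isomorphic :: "('v,'n,'a) hpath \<Rightarrow> ('v,'m,'b) hpath \<Rightarrow> bool" where
  "isomorphic T T' \<longleftrightarrow> (\<exists>\<phi> \<psi>. path_iso T T' \<phi> \<psi>)"

fun is_gseq :: "('v,'n,'a) hpath \<Rightarrow> 'a list \<Rightarrow> bool" where
  "is_gseq T [] = True"
| "is_gseq T (e # es) = (e \<in> Arrows T \<and> is_gseq (glue T e) es)"

fun glue_all :: "('v,'n,'a) hpath \<Rightarrow> 'a list \<Rightarrow> ('v,'n,'a) hpath" where
  "glue_all T [] = T"
| "glue_all T (e # es) = glue_all (glue T e) es"

fun gseq_iso :: "('v,'n,'a) hpath \<Rightarrow> 'a list \<Rightarrow> ('v,'n,'a) hpath \<Rightarrow> 'a list \<Rightarrow> bool" where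
  "gseq_iso T [] T' [] = isomorphic T T'"
| "gseq_iso T (e # es) T' (e' # es') =
     ((\<exists>\<phi> \<psi>. path_iso T T' \<phi> \<psi> \<and> \<psi> e = e') \<and> gseq_iso (glue T e) es (glue T' e') es')"
| "gseq_iso T _ T' _ = False"

definition gseq_rel :: "('v,'n,'a) hpath \<Rightarrow> ('a list \<times> 'a list) set" where
  "gseq_rel T = {(es, es'). gseq_iso T es T es'}"

definition gluing_sequences :: "('v,'n,'a) hpath \<Rightarrow> nat \<Rightarrow> 'a list set set" where
  "gluing_sequences T k = {es. is_gseq T es \<and> length es = k} // gseq_rel T"

definition break_tuples :: "('v,'n,'a) hpath \<Rightarrow> nat \<Rightarrow> 'a list set" where
  "break_tuples T k = {es. set es \<subseteq> Arrows T \<and> distinct es \<and> length es = k}"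

fun tuple_to_gseq :: "('v,'n,'a) hpath \<Rightarrow> 'a list \<Rightarrow> 'a list" where
  "tuple_to_gseq T [] = []"
| "tuple_to_gseq T (e # es) = e # tuple_to_gseq (glue T e) (map (glue_pi T e) es)"

end

theory Submission
  imports Defs
begin

lemma glue_simps[simp]:
  "Nodes (glue T e) = Nodes T - {atgt T e}"
  "Arrows (glue T e) = Arrows T - {e}"
  "asrc (glue T e) a = (if asrc T a = atgt T e then asrc T e else asrc T a)"
  "atgt (glue T e) a = (if atgt T a = atgt T e then asrc T e else atgt T a)"
  "alab (glue T e) = alab T"
  "nlab (glue T e) = (nlab T)(asrc T e := (sub_src T {asrc T e, atgt T e}, sub_tgt T {asrc T e, atgt T e}))"
  by (simp_all add: glue_def Let_def)

lemma undir_rel_iff: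
  "(x,y) \<in> undir_rel T \<longleftrightarrow> (\<exists>a\<in>Arrows T. (x = asrc T a \<and> y = atgt T a) \<or> (x = atgt T a \<and> y = asrc T a))"
  unfolding undir_rel_def by blast

definition conn :: "('v,'n,'a) hpath \<Rightarrow> bool" where
  "conn T \<longleftrightarrow> (\<forall>x\<in>Nodes T. \<forall>y\<in>Nodes T. (x, y) \<in> (undir_rel T)\<^sup>*)"

lemma rtrancl_map_step:
  assumes "\<And>x y. (x,y) \<in> R \<Longrightarrow> (f x, f y) \<in> S\<^sup>*" and "(x,y) \<in> R\<^sup>*"
  shows "(f x, f y) \<in> S\<^sup>*"
  using assms(2)
proof (induction rule: rtrancl_induct)
  case base then show ?case by simp
next
  case (step y z) then show ?case using assms(1) rtrancl_trans by metis
qed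

lemma conn_glue:
  assumes "conn T" and "e \<in> Arrows T"
  shows "conn (glue T e)"
proof -
  let ?u = "asrc T e" and ?w = "atgt T e"
  define r where "r x = (if x = ?w then ?u else x)" for x
  have st: "(r x, r y) \<in> (undir_rel (glue T e))\<^sup>*" if xy: "(x,y) \<in> undir_rel T" for x y
  proof -
    obtain a where a: "a \<in> Arrows T" "(x = asrc T a \<and> y = atgt T a) \<or> (x = atgt T a \<and> y = asrc T a)"
      using xy unfolding undir_rel_iff by blast
    show ?thesis
    proof (cases "a = e")
      case True
      then have "r x = r y" using a by (auto simp: r_def)
      then show ?thesis by simp
    next
      case False
      then have "a \<in> Arrows (glue T e)" using a by simp
      moreover have "(r x = asrc (glue T e) a \<and> r y = atgt (glue T e) a) \<or> (r x = atgt (glue T e) a \<and> r y = asrc (glue T e) a)"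
        using a(2) by (auto simp: r_def)
      ultimately have "(r x, r y) \<in> undir_rel (glue T e)"
        unfolding undir_rel_iff by blast
      then show ?thesis by blast
    qed
  qed
  show ?thesis unfolding conn_def
  proof (intro ballI)
    fix x y assume "x \<in> Nodes (glue T e)" "y \<in> Nodes (glue T e)"
    then have "x \<in> Nodes T" "y \<in> Nodes T" "r x = x" "r y = y" by (auto simp: r_def)
    moreover have "(x,y) \<in> (undir_rel T)\<^sup>*" using assms(1) calculation unfolding conn_def by blast
    moreover have "(r x, r y) \<in> (undir_rel (glue T e))\<^sup>*"
      by (rule rtrancl_map_step[of "undir_rel T" r "undir_rel (glue T e)", OF st calculation(5)])
    ultimately show "(x,y) \<in> (undir_rel (glue T e))\<^sup>*" by simp
  qed
qed

lemma conn_card: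
  assumes "finite (Arrows T)" "finite (Nodes T)"
    "\<forall>a\<in>Arrows T. asrc T a \<in> Nodes T \<and> atgt T a \<in> Nodes T" "conn T"
  shows "card (Nodes T) \<le> card (Arrows T) + 1"
  using assms
proof (induction "card (Arrows T)" arbitrary: T)
  case 0
  then have "Arrows T = {}" by simp
  then have "undir_rel T = {}" unfolding undir_rel_def by simp
  then have "\<forall>x\<in>Nodes T. \<forall>y\<in>Nodes T. x = y" using 0 unfolding conn_def by simp
  then show ?case using card_le_Suc0_iff_eq[OF 0(3)] by simp
next
  case (Suc n)
  have "Arrows T \<noteq> {}" using Suc.hyps(2) by auto
  then obtain a where a: "a \<in> Arrows T" by blast
  show ?case
  proof (cases "asrc T a = atgt T a")
    case True
    define T' where "T' = T\<lparr>Arrows := Arrows T - {a}\<rparr>"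
    have "undir_rel T \<subseteq> (undir_rel T')\<^sup>*"
    proof
      fix p assume "p \<in> undir_rel T"
      then obtain x y where p: "p = (x,y)" "(x,y) \<in> undir_rel T" by (cases p) auto
      then obtain b where b: "b \<in> Arrows T" "(x = asrc T b \<and> y = atgt T b) \<or> (x = atgt T b \<and> y = asrc T b)"
        unfolding undir_rel_iff by blast
      show "p \<in> (undir_rel T')\<^sup>*"
      proof (cases "b = a")
        case True then show ?thesis using b p \<open>asrc T a = atgt T a\<close> by auto
      next
        case False
        then have "(x,y) \<in> undir_rel T'" using b unfolding undir_rel_iff T'_def by auto
        then show ?thesis using p by auto
      qed
    qed
    then have "(undir_rel T)\<^sup>* \<subseteq> (undir_rel T')\<^sup>*" by (rule rtrancl_subset_rtrancl)
    then have "conn T'" using Suc.prems(4) unfolding conn_def T'_def by auto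
    moreover have "card (Arrows T') = n"
      using Suc.hyps(2) card_Diff_singleton[OF a] unfolding T'_def by simp
    ultimately have "card (Nodes T') \<le> card (Arrows T') + 1"
      using Suc.hyps(1)[of T'] Suc.prems by (auto simp: T'_def)
    moreover have "card (Arrows T') + 1 = card (Arrows T)" "Nodes T' = Nodes T"
      using Suc.hyps(2) a Suc.prems(1) by (simp_all add: T'_def)
    ultimately show ?thesis by (metis le_add1 order_trans)
  next
    case False
    let ?G = "glue T a"
    have c: "conn ?G" by (rule conn_glue[OF Suc.prems(4) a])
    have cn: "n = card (Arrows ?G)"
      using Suc.hyps(2) card_Diff_singleton[OF a] by simp
    have f: "finite (Arrows ?G)" "finite (Nodes ?G)" using Suc.prems(1,2) by auto
    have e: "\<forall>b\<in>Arrows ?G. asrc ?G b \<in> Nodes ?G \<and> atgt ?G b \<in> Nodes ?G"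
    proof
      fix b assume "b \<in> Arrows ?G"
      then have "b \<in> Arrows T" by simp
      then have "asrc T b \<in> Nodes T" "atgt T b \<in> Nodes T" "asrc T a \<in> Nodes T"
        using Suc.prems(3) a by blast+
      then show "asrc ?G b \<in> Nodes ?G \<and> atgt ?G b \<in> Nodes ?G" using False by simp
    qed
    have "card (Nodes ?G) \<le> card (Arrows ?G) + 1" by (rule Suc.hyps(1)[OF cn f e c])
    moreover have "card (Nodes ?G) = card (Nodes T) - 1"
      using Suc.prems(3) a by simp
    moreover have "card (Nodes T) \<ge> 1"
    proof -
      have "asrc T a \<in> Nodes T" using Suc.prems(3) a by blast
      then have "Nodes T \<noteq> {}" by blast
      then show ?thesis using Suc.prems(2) by (simp add: Suc_le_eq card_gt_0_iff)
    qed
    ultimately show ?thesis using cn Suc.hyps(2) by linarith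
  qed
qed

lemma dtree_conn: "is_dtree T \<Longrightarrow> conn T"
  by (simp add: is_dtree_def conn_def)

lemma dtree_props:
  assumes "is_dtree T"
  shows "finite (Nodes T)" "Nodes T \<noteq> {}" "finite (Arrows T)"
     "\<And>a. a \<in> Arrows T \<Longrightarrow> asrc T a \<in> Nodes T" "\<And>a. a \<in> Arrows T \<Longrightarrow> atgt T a \<in> Nodes T"
     "card (Arrows T) + 1 = card (Nodes T)"
  using assms by (simp_all add: is_dtree_def)

lemma del_contra:
  assumes "is_dtree T" "b \<in> Arrows T"
    "(asrc T b, atgt T b) \<in> (undir_rel (T\<lparr>Arrows := Arrows T - {b}\<rparr>))\<^sup>*"
    "(atgt T b, asrc T b) \<in> (undir_rel (T\<lparr>Arrows := Arrows T - {b}\<rparr>))\<^sup>*"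
  shows False
proof -
  define T' where "T' = T\<lparr>Arrows := Arrows T - {b}\<rparr>"
  have sub: "undir_rel T \<subseteq> (undir_rel T')\<^sup>*"
  proof
    fix p assume "p \<in> undir_rel T"
    then obtain x y where p: "p = (x,y)" "(x,y) \<in> undir_rel T" by (cases p) auto
    then obtain c where c: "c \<in> Arrows T" "(x = asrc T c \<and> y = atgt T c) \<or> (x = atgt T c \<and> y = asrc T c)"
      unfolding undir_rel_iff by blast
    show "p \<in> (undir_rel T')\<^sup>*"
    proof (cases "c = b")
      case True then show ?thesis using c p assms(3,4) unfolding T'_def by auto
    next
      case False
      then have "c \<in> Arrows T'" using c by (simp add: T'_def)
      moreover have "asrc T' = asrc T" "atgt T' = atgt T" by (simp_all add: T'_def)
      ultimately have "(x,y) \<in> undir_rel T'" using c(2) unfolding undir_rel_iff by auto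
      then show ?thesis using p by simp
    qed
  qed
  have cT: "conn T" by (rule dtree_conn[OF assms(1)])
  have NN: "Nodes T' = Nodes T" by (simp add: T'_def)
  have "conn T'" unfolding conn_def
  proof (intro ballI)
    fix x y assume "x \<in> Nodes T'" "y \<in> Nodes T'"
    then have "(x,y) \<in> (undir_rel T)\<^sup>*" using cT NN unfolding conn_def by simp
    then show "(x,y) \<in> (undir_rel T')\<^sup>*" using rtrancl_subset_rtrancl[OF sub] by (rule subsetD[rotated])
  qed
  moreover have "finite (Arrows T')" "finite (Nodes T')"
    "\<forall>a\<in>Arrows T'. asrc T' a \<in> Nodes T' \<and> atgt T' a \<in> Nodes T'"
    using dtree_props[OF assms(1)] by (simp_all add: T'_def)
  ultimately have "card (Nodes T') \<le> card (Arrows T') + 1"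
    using conn_card[of T'] by simp
  moreover have "card (Arrows T') + 1 = card (Arrows T)"
    using assms(2) dtree_props(3)[OF assms(1)] card_Diff_singleton[OF assms(2)]
    by (simp add: T'_def card_gt_0_iff[symmetric]; metis Suc_pred card_gt_0_iff empty_iff)
  ultimately show False using dtree_props(6)[OF assms(1)] NN by simp
qed

lemma dtree_noloop: "is_dtree T \<Longrightarrow> a \<in> Arrows T \<Longrightarrow> asrc T a \<noteq> atgt T a"
  using del_contra[of T a] by auto

lemma dtree_nopar:
  assumes "is_dtree T" "a \<in> Arrows T" "b \<in> Arrows T" "a \<noteq> b"
    "asrc T b \<in> {asrc T a, atgt T a}" "atgt T b \<in> {asrc T a, atgt T a}"
  shows False
proof -
  let ?T' = "T\<lparr>Arrows := Arrows T - {b}\<rparr>"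
  have "(asrc T b, atgt T b) \<in> undir_rel ?T' \<or> asrc T b = atgt T b"
    "(atgt T b, asrc T b) \<in> undir_rel ?T' \<or> asrc T b = atgt T b"
    using assms(2,4,5,6) unfolding undir_rel_iff by auto
  then show False using del_contra[OF assms(1,3)] by auto
qed

lemma dtree_glue:
  assumes "is_dtree T" "e \<in> Arrows T"
  shows "is_dtree (glue T e)"
proof -
  have ne: "asrc T e \<noteq> atgt T e" by (rule dtree_noloop[OF assms])
  have c: "conn (glue T e)" by (rule conn_glue[OF dtree_conn[OF assms(1)] assms(2)])
  note P = dtree_props[OF assms(1)]
  have ca: "card (Arrows T) > 0" using P(3) assms(2) by (auto simp: card_gt_0_iff)
  have "card (Arrows (glue T e)) + 1 = card (Nodes (glue T e))"
    using P(6) card_Diff_singleton[OF assms(2)] card_Diff_singleton[OF P(5)[OF assms(2)]] ca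
    by simp
  moreover have "asrc T e \<in> Nodes (glue T e)" using P(4)[OF assms(2)] ne by simp
  moreover have "\<forall>a\<in>Arrows (glue T e). asrc (glue T e) a \<in> Nodes (glue T e) \<and> atgt (glue T e) a \<in> Nodes (glue T e)"
    using P(4,5) assms(2) ne by simp
  ultimately show ?thesis using c P(1,3) unfolding is_dtree_def conn_def
    by (simp; blast)
qed

lemma hg_single:
  assumes "higraph V E" "x \<in> E" "y \<in> E" "snd x \<inter> fst y \<noteq> {}"
  shows "\<exists>K. snd x \<inter> fst y = {K}"
proof -
  have "snd x \<inter> fst y \<noteq> {} \<longrightarrow> (\<exists>K. snd x \<inter> fst y = {K} \<and> fst x \<inter> (fst y - {K}) = {}
              \<and> (snd x - {K}) \<inter> snd y = {}
              \<and> (fst x \<union> (fst y - {K}), (snd x - {K}) \<union> snd y) \<in> E)"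
    using assms(1,2,3) unfolding higraph_def by simp
  then show ?thesis using assms(4) by auto
qed

lemma hg_trans:
  assumes "higraph V E" "x \<in> E" "y \<in> E" "snd x \<inter> fst y = {K}"
  shows "fst x \<inter> (fst y - {K}) = {}" "(snd x - {K}) \<inter> snd y = {}"
    "(fst x \<union> (fst y - {K}), (snd x - {K}) \<union> snd y) \<in> E"
proof -
  obtain K' where "snd x \<inter> fst y = {K'}"
    "fst x \<inter> (fst y - {K'}) = {}" "(snd x - {K'}) \<inter> snd y = {}"
    "(fst x \<union> (fst y - {K'}), (snd x - {K'}) \<union> snd y) \<in> E"
    using assms unfolding higraph_def by (metis empty_not_insert)
  moreover have "K' = K" using calculation(1) assms(4) by simp
  ultimately show "fst x \<inter> (fst y - {K}) = {}" "(snd x - {K}) \<inter> snd y = {}"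
    "(fst x \<union> (fst y - {K}), (snd x - {K}) \<union> snd y) \<in> E" by simp_all
qed

lemma path_props:
  assumes "is_path E T"
  shows "is_dtree T" "\<And>v. v \<in> Nodes T \<Longrightarrow> nlab T v \<in> E"
    "\<And>a. a \<in> Arrows T \<Longrightarrow> snd (nlab T (asrc T a)) \<inter> fst (nlab T (atgt T a)) = {alab T a}"
    "\<And>a b. a \<in> Arrows T \<Longrightarrow> b \<in> Arrows T \<Longrightarrow> a \<noteq> b \<Longrightarrow> asrc T a = asrc T b \<Longrightarrow> alab T a \<noteq> alab T b"
    "\<And>a b. a \<in> Arrows T \<Longrightarrow> b \<in> Arrows T \<Longrightarrow> a \<noteq> b \<Longrightarrow> atgt T a = atgt T b \<Longrightarrow> alab T a \<noteq> alab T b"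
  using assms unfolding is_path_def by blast+

lemma path_lab_in:
  assumes "is_path E T" "a \<in> Arrows T"
  shows "alab T a \<in> snd (nlab T (asrc T a))" "alab T a \<in> fst (nlab T (atgt T a))"
  using path_props(3)[OF assms] by auto

lemma sub_arrows_e:
  assumes "is_dtree T" "e \<in> Arrows T"
  shows "sub_arrows T {asrc T e, atgt T e} = {e}"
proof -
  have "a = e" if "a \<in> Arrows T" "asrc T a \<in> {asrc T e, atgt T e}" "atgt T a \<in> {asrc T e, atgt T e}" for a
  proof (rule ccontr)
    assume "a \<noteq> e"
    then show False using dtree_nopar[OF assms(1,2) that(1)] that(2,3) by simp
  qed
  then show ?thesis using assms(2) unfolding sub_arrows_def by auto
qed

lemma glue_lab:
  assumes "is_dtree T" "e \<in> Arrows T"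
  shows "sub_src T {asrc T e, atgt T e} = fst (nlab T (asrc T e)) \<union> (fst (nlab T (atgt T e)) - {alab T e})"
    "sub_tgt T {asrc T e, atgt T e} = (snd (nlab T (asrc T e)) - {alab T e}) \<union> snd (nlab T (atgt T e))"
proof -
  have ne: "asrc T e \<noteq> atgt T e" by (rule dtree_noloop[OF assms])
  have sa: "sub_arrows T {asrc T e, atgt T e} = {e}" by (rule sub_arrows_e[OF assms])
  have 1: "{alab T a |a. a \<in> sub_arrows T {asrc T e, atgt T e} \<and> atgt T a = v} = (if v = atgt T e then {alab T e} else {})" for v
    unfolding sa by auto
  have 2: "{alab T a |a. a \<in> sub_arrows T {asrc T e, atgt T e} \<and> asrc T a = v} = (if v = asrc T e then {alab T e} else {})" for v
    unfolding sa by auto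
  show "sub_src T {asrc T e, atgt T e} = fst (nlab T (asrc T e)) \<union> (fst (nlab T (atgt T e)) - {alab T e})"
    unfolding sub_src_def 1 using ne by simp
  show "sub_tgt T {asrc T e, atgt T e} = (snd (nlab T (asrc T e)) - {alab T e}) \<union> snd (nlab T (atgt T e))"
    unfolding sub_tgt_def 2 using ne by simp
qed

lemma glue_nlab:
  assumes "is_dtree T" "e \<in> Arrows T"
  shows "nlab (glue T e) = (nlab T)(asrc T e := (fst (nlab T (asrc T e)) \<union> (fst (nlab T (atgt T e)) - {alab T e}),
            (snd (nlab T (asrc T e)) - {alab T e}) \<union> snd (nlab T (atgt T e))))"
  using glue_lab[OF assms] by simp

lemma path_glue:
  assumes hg: "higraph V E" and P: "is_path E T" and e: "e \<in> Arrows T"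
  shows "is_path E (glue T e)"
proof -
  note PP = path_props[OF P]
  have D: "is_dtree T" by (rule PP(1))
  note DP = dtree_props[OF D]
  define u where "u = asrc T e"
  define w where "w = atgt T e"
  define K where "K = alab T e"
  define N where "N = nlab T"
  define c where "c = (fst (N u) \<union> (fst (N w) - {K}), (snd (N u) - {K}) \<union> snd (N w))"
  have ne: "u \<noteq> w" unfolding u_def w_def by (rule dtree_noloop[OF D e])
  have uN: "u \<in> Nodes T" "w \<in> Nodes T" unfolding u_def w_def using DP(4,5) e by auto
  have hK: "snd (N u) \<inter> fst (N w) = {K}" unfolding N_def u_def w_def K_def by (rule PP(3)[OF e])
  have NE: "N u \<in> E" "N w \<in> E" unfolding N_def using PP(2) uN by auto
  note tr = hg_trans[OF hg NE hK]
  have cE: "c \<in> E" unfolding c_def by (rule tr(3))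
  have nl: "nlab (glue T e) = N(u := c)"
    unfolding c_def N_def u_def w_def K_def by (rule glue_nlab[OF D e])
  have D': "is_dtree (glue T e)" by (rule dtree_glue[OF D e])
  have lin: "alab T a \<in> snd (N (asrc T a))" "alab T a \<in> fst (N (atgt T a))" if "a \<in> Arrows T" for a
    unfolding N_def using path_lab_in[OF P that] by auto
  have np: "\<not> (asrc T a \<in> {u,w} \<and> atgt T a \<in> {u,w})" if "a \<in> Arrows T" "a \<noteq> e" for a
    using dtree_nopar[OF D e that(1) that(2)[symmetric]] unfolding u_def w_def by auto
  have gs: "asrc (glue T e) a = (if asrc T a = w then u else asrc T a)"
    "atgt (glue T e) a = (if atgt T a = w then u else atgt T a)" for a
    unfolding u_def w_def by simp_all
  have labE: "\<forall>v\<in>Nodes (glue T e). nlab (glue T e) v \<in> E"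
    using PP(2) cE unfolding nl N_def by simp
  have arr: "snd (nlab (glue T e) (asrc (glue T e) a)) \<inter> fst (nlab (glue T e) (atgt (glue T e) a)) = {alab (glue T e) a}"
    if a: "a \<in> Arrows (glue T e)" for a
  proof -
    have aA: "a \<in> Arrows T" "a \<noteq> e" using a by auto
    define s where "s = asrc T a"
    define t where "t = atgt T a"
    define L where "L = alab T a"
    have hL: "snd (N s) \<inter> fst (N t) = {L}" unfolding N_def s_def t_def L_def by (rule PP(3)[OF aA(1)])
    have sN: "s \<in> Nodes T" "t \<in> Nodes T" unfolding s_def t_def using DP(4,5) aA by auto
    have np': "\<not> (s \<in> {u,w} \<and> t \<in> {u,w})" unfolding s_def t_def by (rule np[OF aA])
    have LsS: "L \<in> snd (N s)" "L \<in> fst (N t)" using hL by auto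
    show ?thesis
    proof (cases "s \<in> {u,w}")
      case True
      then have tn: "t \<noteq> u" "t \<noteq> w" using np' by auto
      have L1: "L \<in> snd c"
      proof (cases "s = u")
        case True
        have "L \<noteq> K" unfolding L_def K_def
          using PP(4)[OF aA(1) e aA(2)] True unfolding s_def u_def by simp
        then show ?thesis using LsS(1) True unfolding c_def by simp
      next
        case False
        then have "s = w" using \<open>s \<in> {u,w}\<close> by simp
        then show ?thesis using LsS(1) unfolding c_def by simp
      qed
      have tE: "N t \<in> E" unfolding N_def using PP(2) sN by simp
      obtain L' where "snd c \<inter> fst (N t) = {L'}"
        using hg_single[OF hg cE tE] L1 LsS(2) by blast
      then have "snd c \<inter> fst (N t) = {L}" using L1 LsS(2) by auto
      moreover have "asrc (glue T e) a = u" using True unfolding gs s_def by auto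
      moreover have "atgt (glue T e) a = t" using tn unfolding gs t_def by auto
      ultimately show ?thesis unfolding nl using tn by (simp add: L_def)
    next
      case False
      then have sn: "s \<noteq> u" "s \<noteq> w" by auto
      show ?thesis
      proof (cases "t \<in> {u,w}")
        case True
        have L1: "L \<in> fst c"
        proof (cases "t = u")
          case True
          then show ?thesis using LsS(2) unfolding c_def by simp
        next
          case False
          then have tw: "t = w" using \<open>t \<in> {u,w}\<close> by simp
          have "L \<noteq> K" unfolding L_def K_def
            using PP(5)[OF aA(1) e aA(2)] tw unfolding t_def w_def by simp
          then show ?thesis using LsS(2) tw unfolding c_def by simp
        qed
        have sE: "N s \<in> E" unfolding N_def using PP(2) sN by simp
        obtain L' where "snd (N s) \<inter> fst c = {L'}"
          using hg_single[OF hg sE cE] L1 LsS(1) by blast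
        then have "snd (N s) \<inter> fst c = {L}" using L1 LsS(1) by auto
        moreover have "atgt (glue T e) a = u" using True unfolding gs t_def by auto
        moreover have "asrc (glue T e) a = s" using sn unfolding gs s_def by auto
        ultimately show ?thesis unfolding nl using sn by (simp add: L_def)
      next
        case False
        then have tn: "t \<noteq> u" "t \<noteq> w" by auto
        have "asrc (glue T e) a = s" "atgt (glue T e) a = t" using sn tn unfolding gs s_def t_def by auto
        then show ?thesis unfolding nl using sn tn hL by (simp add: L_def)
      qed
    qed
  qed
  have dsrc: "alab (glue T e) a \<noteq> alab (glue T e) b"
    if ab: "a \<in> Arrows (glue T e)" "b \<in> Arrows (glue T e)" "a \<noteq> b" "asrc (glue T e) a = asrc (glue T e) b" for a b
  proof -
    have aA: "a \<in> Arrows T" "a \<noteq> e" "b \<in> Arrows T" "b \<noteq> e" using ab by auto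
    show ?thesis
    proof (cases "asrc T a = asrc T b")
      case True then show ?thesis using PP(4)[OF aA(1,3) ab(3)] by simp
    next
      case False
      have key: "alab T x \<noteq> alab T y" if "x \<in> Arrows T" "x \<noteq> e" "y \<in> Arrows T" "asrc T x = u" "asrc T y = w" for x y
      proof -
        have "alab T x \<noteq> K" using PP(4)[OF that(1) e that(2)] that(4) unfolding u_def K_def by simp
        then have "alab T x \<in> snd (N u) - {K}" using lin(1)[OF that(1)] that(4) by simp
        moreover have "alab T y \<in> snd (N w)" using lin(1)[OF that(3)] that(5) by simp
        ultimately show ?thesis using tr(2) by auto
      qed
      have "(asrc T a = u \<and> asrc T b = w) \<or> (asrc T a = w \<and> asrc T b = u)"
        using ab(4) False unfolding gs by (auto split: if_splits)
      then show ?thesis using key[OF aA(1,2,3)] key[OF aA(3,4,1)] by auto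
    qed
  qed
  have dtgt: "alab (glue T e) a \<noteq> alab (glue T e) b"
    if ab: "a \<in> Arrows (glue T e)" "b \<in> Arrows (glue T e)" "a \<noteq> b" "atgt (glue T e) a = atgt (glue T e) b" for a b
  proof -
    have aA: "a \<in> Arrows T" "a \<noteq> e" "b \<in> Arrows T" "b \<noteq> e" using ab by auto
    show ?thesis
    proof (cases "atgt T a = atgt T b")
      case True then show ?thesis using PP(5)[OF aA(1,3) ab(3)] by simp
    next
      case False
      have key: "alab T x \<noteq> alab T y" if "x \<in> Arrows T" "y \<in> Arrows T" "y \<noteq> e" "atgt T x = u" "atgt T y = w" for x y
      proof -
        have "alab T y \<noteq> K" using PP(5)[OF that(2) e that(3)] that(5) unfolding w_def K_def by simp
        then have "alab T y \<in> fst (N w) - {K}" using lin(2)[OF that(2)] that(5) by simp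
        moreover have "alab T x \<in> fst (N u)" using lin(2)[OF that(1)] that(4) by simp
        ultimately show ?thesis using tr(1) by auto
      qed
      have "(atgt T a = u \<and> atgt T b = w) \<or> (atgt T a = w \<and> atgt T b = u)"
        using ab(4) False unfolding gs by (auto split: if_splits)
      then show ?thesis using key[OF aA(1,3,4)] key[OF aA(3,1,2)] by auto
    qed
  qed
  show ?thesis unfolding is_path_def
    using D' labE arr dsrc dtgt by blast
qed

lemma path_iso_id: "path_iso T T id id"
  unfolding path_iso_def by simp

lemma path_iso_comp:
  assumes "path_iso T1 T2 f g" "path_iso T2 T3 f' g'"
  shows "path_iso T1 T3 (f' \<circ> f) (g' \<circ> g)"
proof -
  have b: "bij_betw f (Nodes T1) (Nodes T2)" "bij_betw g (Arrows T1) (Arrows T2)"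
    "bij_betw f' (Nodes T2) (Nodes T3)" "bij_betw g' (Arrows T2) (Arrows T3)"
    using assms unfolding path_iso_def by auto
  have "\<forall>a\<in>Arrows T1. asrc T3 ((g' \<circ> g) a) = (f' \<circ> f) (asrc T1 a) \<and> atgt T3 ((g' \<circ> g) a) = (f' \<circ> f) (atgt T1 a)
                      \<and> alab T3 ((g' \<circ> g) a) = alab T1 a"
  proof
    fix a assume a: "a \<in> Arrows T1"
    then have "g a \<in> Arrows T2" using bij_betw_apply[OF b(2)] by simp
    then show "asrc T3 ((g' \<circ> g) a) = (f' \<circ> f) (asrc T1 a) \<and> atgt T3 ((g' \<circ> g) a) = (f' \<circ> f) (atgt T1 a)
                      \<and> alab T3 ((g' \<circ> g) a) = alab T1 a"
      using a assms unfolding path_iso_def by simp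
  qed
  moreover have "\<forall>v\<in>Nodes T1. nlab T3 ((f' \<circ> f) v) = nlab T1 v"
  proof
    fix v assume v: "v \<in> Nodes T1"
    then have "f v \<in> Nodes T2" using bij_betw_apply[OF b(1)] by simp
    then show "nlab T3 ((f' \<circ> f) v) = nlab T1 v" using v assms unfolding path_iso_def by simp
  qed
  ultimately show ?thesis unfolding path_iso_def
    using bij_betw_trans[OF b(1) b(3)] bij_betw_trans[OF b(2) b(4)] by simp
qed

lemma path_iso_idI:
  assumes "Nodes T1 = Nodes T2" "Arrows T1 = Arrows T2"
    "\<And>a. a \<in> Arrows T1 \<Longrightarrow> asrc T2 a = asrc T1 a \<and> atgt T2 a = atgt T1 a \<and> alab T2 a = alab T1 a"
    "\<And>v. v \<in> Nodes T1 \<Longrightarrow> nlab T2 v = nlab T1 v"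
  shows "path_iso T1 T2 id id"
  using assms unfolding path_iso_def by simp

lemma path_iso_id_sym: "path_iso T1 T2 id id \<Longrightarrow> path_iso T2 T1 id id"
  unfolding path_iso_def by (simp add: bij_betw_def)

definition comb :: "'v hedge \<Rightarrow> 'v hedge \<Rightarrow> 'v \<Rightarrow> 'v hedge" where
  "comb A B K = (fst A \<union> (fst B - {K}), (snd A - {K}) \<union> snd B)"

lemma glue_nlab':
  assumes "is_dtree T" "e \<in> Arrows T"
  shows "nlab (glue T e) = (nlab T)(asrc T e := comb (nlab T (asrc T e)) (nlab T (atgt T e)) (alab T e))"
  using glue_nlab[OF assms] unfolding comb_def by simp

lemma comb_chain:
  assumes "K \<notin> fst C - {L}" "L \<notin> snd A - {K}"
  shows "comb (comb A B K) C L = comb A (comb B C L) K"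
proof -
  have 1: "fst A \<union> (fst B - {K}) \<union> (fst C - {L}) = fst A \<union> (fst B \<union> (fst C - {L}) - {K})"
    using assms(1) by blast
  have 2: "((snd A - {K}) \<union> snd B) - {L} \<union> snd C = (snd A - {K}) \<union> ((snd B - {L}) \<union> snd C)"
    using assms(2) by blast
  show ?thesis unfolding comb_def using 1 2 by simp
qed

lemma comb_src: "L \<notin> snd B \<Longrightarrow> K \<notin> snd C \<Longrightarrow> comb (comb A B K) C L = comb (comb A C L) B K"
  unfolding comb_def by auto

lemma comb_tgt: "K \<notin> fst C \<Longrightarrow> L \<notin> fst A \<Longrightarrow> comb C (comb A B K) L = comb A (comb C B L) K"
  unfolding comb_def by auto

lemma glue2_facts:
  assumes hg: "higraph V E" and P: "is_path E T" and a: "a \<in> Arrows T" and b: "b \<in> Arrows T" and ab: "a \<noteq> b"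
  shows "is_path E (glue T a)" "is_dtree (glue T a)" "b \<in> Arrows (glue T a)"
    "nlab (glue (glue T a) b) = (nlab (glue T a))(asrc (glue T a) b :=
        comb (nlab (glue T a) (asrc (glue T a) b)) (nlab (glue T a) (atgt (glue T a) b)) (alab T b))"
    "nlab (glue T a) = (nlab T)(asrc T a := comb (nlab T (asrc T a)) (nlab T (atgt T a)) (alab T a))"
proof -
  show P1: "is_path E (glue T a)" by (rule path_glue[OF hg P a])
  show D1: "is_dtree (glue T a)" by (rule path_props(1)[OF P1])
  show b1: "b \<in> Arrows (glue T a)" using b ab by simp
  show "nlab (glue (glue T a) b) = (nlab (glue T a))(asrc (glue T a) b :=
        comb (nlab (glue T a) (asrc (glue T a) b)) (nlab (glue T a) (atgt (glue T a) b)) (alab T b))"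
    using glue_nlab'[OF D1 b1] by simp
  show "nlab (glue T a) = (nlab T)(asrc T a := comb (nlab T (asrc T a)) (nlab T (atgt T a)) (alab T a))"
    by (rule glue_nlab'[OF path_props(1)[OF P] a])
qed

lemma swap_chain:
  assumes hg: "higraph V E" and P: "is_path E T" and a: "a \<in> Arrows T" and b: "b \<in> Arrows T" and ab: "a \<noteq> b"
    and c: "asrc T b = atgt T a"
  shows "path_iso (glue (glue T a) b) (glue (glue T b) a) id id"
proof -
  note F1 = glue2_facts[OF hg P a b ab]
  note F2 = glue2_facts[OF hg P b a ab[symmetric]]
  have D: "is_dtree T" by (rule path_props(1)[OF P])
  note PP = path_props[OF P]
  note DP = dtree_props[OF D]
  have na: "asrc T a \<noteq> atgt T a" by (rule dtree_noloop[OF D a])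
  have nb: "asrc T b \<noteq> atgt T b" by (rule dtree_noloop[OF D b])
  have np: "\<not> (asrc T b \<in> {asrc T a, atgt T a} \<and> atgt T b \<in> {asrc T a, atgt T a})"
    using dtree_nopar[OF D a b ab] by blast
  have hK: "snd (nlab T (asrc T a)) \<inter> fst (nlab T (atgt T a)) = {alab T a}" by (rule PP(3)[OF a])
  have hL: "snd (nlab T (asrc T b)) \<inter> fst (nlab T (atgt T b)) = {alab T b}" by (rule PP(3)[OF b])
  have NE: "nlab T (asrc T a) \<in> E" "nlab T (atgt T a) \<in> E" "nlab T (asrc T b) \<in> E" "nlab T (atgt T b) \<in> E"
    using PP(2) DP(4,5) a b by auto
  note ta = hg_trans[OF hg NE(1,2) hK]
  note tb = hg_trans[OF hg NE(3,4) hL]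
  have y: "atgt T b \<noteq> asrc T a" "atgt T b \<noteq> atgt T a" using np nb c by auto
  have c1: "alab T a \<notin> fst (nlab T (atgt T b)) - {alab T b}"
    using tb(1) hK c by auto
  have c2: "alab T b \<notin> snd (nlab T (asrc T a)) - {alab T a}"
    using ta(2) hL c by auto
  note cc = comb_chain[OF c1 c2]
  show ?thesis
  proof (rule path_iso_idI)
    show "Nodes (glue (glue T a) b) = Nodes (glue (glue T b) a)" using c y by auto
    show "Arrows (glue (glue T a) b) = Arrows (glue (glue T b) a)" by auto
    show "asrc (glue (glue T b) a) z = asrc (glue (glue T a) b) z \<and> atgt (glue (glue T b) a) z = atgt (glue (glue T a) b) z \<and>
         alab (glue (glue T b) a) z = alab (glue (glue T a) b) z" for z
      using c y na by auto
    show "nlab (glue (glue T b) a) v = nlab (glue (glue T a) b) v" if "v \<in> Nodes (glue (glue T a) b)" for v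
      unfolding F1(4) F2(4) F1(5) F2(5) using c y na cc that by simp
  qed
qed

lemma swap_src:
  assumes hg: "higraph V E" and P: "is_path E T" and a: "a \<in> Arrows T" and b: "b \<in> Arrows T" and ab: "a \<noteq> b"
    and c: "asrc T b = asrc T a"
  shows "path_iso (glue (glue T a) b) (glue (glue T b) a) id id"
proof -
  note F1 = glue2_facts[OF hg P a b ab]
  note F2 = glue2_facts[OF hg P b a ab[symmetric]]
  have D: "is_dtree T" by (rule path_props(1)[OF P])
  note PP = path_props[OF P]
  note DP = dtree_props[OF D]
  have na: "asrc T a \<noteq> atgt T a" by (rule dtree_noloop[OF D a])
  have nb: "asrc T b \<noteq> atgt T b" by (rule dtree_noloop[OF D b])
  have np: "\<not> (asrc T b \<in> {asrc T a, atgt T a} \<and> atgt T b \<in> {asrc T a, atgt T a})"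
    using dtree_nopar[OF D a b ab] by blast
  have hK: "snd (nlab T (asrc T a)) \<inter> fst (nlab T (atgt T a)) = {alab T a}" by (rule PP(3)[OF a])
  have hL: "snd (nlab T (asrc T b)) \<inter> fst (nlab T (atgt T b)) = {alab T b}" by (rule PP(3)[OF b])
  have NE: "nlab T (asrc T a) \<in> E" "nlab T (atgt T a) \<in> E" "nlab T (asrc T b) \<in> E" "nlab T (atgt T b) \<in> E"
    using PP(2) DP(4,5) a b by auto
  note ta = hg_trans[OF hg NE(1,2) hK]
  note tb = hg_trans[OF hg NE(3,4) hL]
  have y: "atgt T b \<noteq> asrc T a" "atgt T b \<noteq> atgt T a" using np nb c by auto
  have KL: "alab T a \<noteq> alab T b" using PP(4)[OF a b ab] c by simp
  have c1: "alab T b \<notin> snd (nlab T (atgt T a))"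
    using ta(2) hL c KL by auto
  have c2: "alab T a \<notin> snd (nlab T (atgt T b))"
    using tb(2) hK c KL by auto
  note cc = comb_src[OF c1 c2]
  show ?thesis
  proof (rule path_iso_idI)
    show "Nodes (glue (glue T a) b) = Nodes (glue (glue T b) a)" using c y by auto
    show "Arrows (glue (glue T a) b) = Arrows (glue (glue T b) a)" by auto
    show "asrc (glue (glue T b) a) z = asrc (glue (glue T a) b) z \<and> atgt (glue (glue T b) a) z = atgt (glue (glue T a) b) z \<and>
         alab (glue (glue T b) a) z = alab (glue (glue T a) b) z" for z
      using c y na by auto
    show "nlab (glue (glue T b) a) v = nlab (glue (glue T a) b) v" if "v \<in> Nodes (glue (glue T a) b)" for v
      unfolding F1(4) F2(4) F1(5) F2(5) using c y na cc that by simp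
  qed
qed

lemma swap_tgt:
  assumes hg: "higraph V E" and P: "is_path E T" and a: "a \<in> Arrows T" and b: "b \<in> Arrows T" and ab: "a \<noteq> b"
    and c: "atgt T b = atgt T a"
  shows "path_iso (glue (glue T a) b) (glue (glue T b) a) (Transposition.transpose (asrc T a) (asrc T b)) id"
proof -
  note F1 = glue2_facts[OF hg P a b ab]
  note F2 = glue2_facts[OF hg P b a ab[symmetric]]
  have D: "is_dtree T" by (rule path_props(1)[OF P])
  note PP = path_props[OF P]
  note DP = dtree_props[OF D]
  have na: "asrc T a \<noteq> atgt T a" by (rule dtree_noloop[OF D a])
  have nb: "asrc T b \<noteq> atgt T b" by (rule dtree_noloop[OF D b])
  have np: "\<not> (asrc T b \<in> {asrc T a, atgt T a} \<and> atgt T b \<in> {asrc T a, atgt T a})"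
    using dtree_nopar[OF D a b ab] by blast
  have hK: "snd (nlab T (asrc T a)) \<inter> fst (nlab T (atgt T a)) = {alab T a}" by (rule PP(3)[OF a])
  have hL: "snd (nlab T (asrc T b)) \<inter> fst (nlab T (atgt T b)) = {alab T b}" by (rule PP(3)[OF b])
  have NE: "nlab T (asrc T a) \<in> E" "nlab T (atgt T a) \<in> E" "nlab T (asrc T b) \<in> E" "nlab T (atgt T b) \<in> E"
    using PP(2) DP(4,5) a b by auto
  note ta = hg_trans[OF hg NE(1,2) hK]
  note tb = hg_trans[OF hg NE(3,4) hL]
  have x: "asrc T b \<noteq> asrc T a" "asrc T b \<noteq> atgt T a" using np nb c by auto
  have KL: "alab T a \<noteq> alab T b" using PP(5)[OF a b ab] c by simp
  have c1: "alab T a \<notin> fst (nlab T (asrc T b))"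
    using tb(1) hK c KL by auto
  have c2: "alab T b \<notin> fst (nlab T (asrc T a))"
    using ta(1) hL c KL by auto
  note cc = comb_tgt[OF c1 c2]
  define u where "u = asrc T a"
  define x where "x = asrc T b"
  define w where "w = atgt T a"
  have uN: "u \<in> Nodes T" "x \<in> Nodes T" using DP(4) a b unfolding u_def x_def by auto
  have nd: "u \<noteq> x" "u \<noteq> w" "x \<noteq> w" using x na unfolding u_def x_def w_def by auto
  have N1: "Nodes (glue (glue T a) b) = Nodes T - {w} - {u}" using c x na unfolding u_def w_def by auto
  have N2: "Nodes (glue (glue T b) a) = Nodes T - {w} - {x}" using c x na unfolding x_def w_def by auto
  have img: "Transposition.transpose u x ` (Nodes T - {w} - {u}) = Nodes T - {w} - {x}"
  proof (rule set_eqI)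
    fix z show "z \<in> Transposition.transpose u x ` (Nodes T - {w} - {u}) \<longleftrightarrow> z \<in> Nodes T - {w} - {x}"
      unfolding in_transpose_image_iff using uN nd by (auto simp: transpose_def)
  qed
  have bij: "bij_betw (Transposition.transpose u x) (Nodes T - {w} - {u}) (Nodes T - {w} - {x})"
    using img by (simp add: bij_betw_def)
  show ?thesis unfolding path_iso_def u_def[symmetric] x_def[symmetric]
  proof (intro conjI ballI)
    show "bij_betw (Transposition.transpose u x) (Nodes (glue (glue T a) b)) (Nodes (glue (glue T b) a))"
      unfolding N1 N2 by (rule bij)
    show "bij_betw id (Arrows (glue (glue T a) b)) (Arrows (glue (glue T b) a))"
      by (simp add: Diff_insert2[symmetric] insert_commute)
    fix z assume "z \<in> Arrows (glue (glue T a) b)"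
    show "asrc (glue (glue T b) a) (id z) = Transposition.transpose u x (asrc (glue (glue T a) b) z)"
      using c nd unfolding u_def x_def w_def by (auto simp: transpose_def)
    show "atgt (glue (glue T b) a) (id z) = Transposition.transpose u x (atgt (glue (glue T a) b) z)"
      using c nd unfolding u_def x_def w_def by (auto simp: transpose_def)
    show "alab (glue (glue T b) a) (id z) = alab (glue (glue T a) b) z" by simp
  next
    fix v assume v: "v \<in> Nodes (glue (glue T a) b)"
    show "nlab (glue (glue T b) a) (Transposition.transpose u x v) = nlab (glue (glue T a) b) v"
    proof (cases "v = x")
      case True
      then show ?thesis unfolding F1(4) F2(4) F1(5) F2(5) using c nd cc unfolding u_def x_def w_def by simp
    next
      case False
      then have "v \<noteq> u" "v \<noteq> w" "v \<noteq> x" using v N1 by auto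
      then show ?thesis unfolding F1(4) F2(4) F1(5) F2(5) using c nd unfolding u_def x_def w_def by simp
    qed
  qed
qed

lemma swap_disj:
  assumes hg: "higraph V E" and P: "is_path E T" and a: "a \<in> Arrows T" and b: "b \<in> Arrows T" and ab: "a \<noteq> b"
    and c: "asrc T b \<noteq> asrc T a" "asrc T b \<noteq> atgt T a" "atgt T b \<noteq> asrc T a" "atgt T b \<noteq> atgt T a"
  shows "path_iso (glue (glue T a) b) (glue (glue T b) a) id id"
proof -
  note F1 = glue2_facts[OF hg P a b ab]
  note F2 = glue2_facts[OF hg P b a ab[symmetric]]
  show ?thesis
  proof (rule path_iso_idI)
    show "Nodes (glue (glue T a) b) = Nodes (glue (glue T b) a)" using c by auto
    show "Arrows (glue (glue T a) b) = Arrows (glue (glue T b) a)" by auto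
    show "asrc (glue (glue T b) a) z = asrc (glue (glue T a) b) z \<and> atgt (glue (glue T b) a) z = atgt (glue (glue T a) b) z \<and>
         alab (glue (glue T b) a) z = alab (glue (glue T a) b) z" for z
      using c by auto
    show "nlab (glue (glue T b) a) v = nlab (glue (glue T a) b) v" for v
      unfolding F1(4) F2(4) F1(5) F2(5) using c by simp
  qed
qed

lemma swap_glue:
  assumes hg: "higraph V E" and P: "is_path E T" and a: "a \<in> Arrows T" and b: "b \<in> Arrows T" and ab: "a \<noteq> b"
  shows "\<exists>f. path_iso (glue (glue T a) b) (glue (glue T b) a) f id"
proof -
  have D: "is_dtree T" by (rule path_props(1)[OF P])
  have na: "asrc T a \<noteq> atgt T a" by (rule dtree_noloop[OF D a])
  have nb: "asrc T b \<noteq> atgt T b" by (rule dtree_noloop[OF D b])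
  show ?thesis
  proof (cases "asrc T b = atgt T a")
    case True then show ?thesis using swap_chain[OF hg P a b ab] by blast
  next
    case F1: False
    show ?thesis
    proof (cases "asrc T a = atgt T b")
      case True then show ?thesis using path_iso_id_sym[OF swap_chain[OF hg P b a ab[symmetric] True]] by blast
    next
      case F2: False
      show ?thesis
      proof (cases "asrc T b = asrc T a")
        case True then show ?thesis using swap_src[OF hg P a b ab] by blast
      next
        case F3: False
        show ?thesis
        proof (cases "atgt T b = atgt T a")
          case True then show ?thesis using swap_tgt[OF hg P a b ab] by blast
        next
          case False
          then show ?thesis using swap_disj[OF hg P a b ab] F1 F2 F3 by metis
        qed
      qed
    qed
  qed
qed

lemma iso_glue:
  assumes I: "path_iso T T' f g" and D: "is_dtree T" and D': "is_dtree T'" and e: "e \<in> Arrows T"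
  shows "path_iso (glue T e) (glue T' (g e)) f g"
proof -
  have bN: "bij_betw f (Nodes T) (Nodes T')" and bA: "bij_betw g (Arrows T) (Arrows T')"
    and h1: "\<And>a. a \<in> Arrows T \<Longrightarrow> asrc T' (g a) = f (asrc T a) \<and> atgt T' (g a) = f (atgt T a) \<and> alab T' (g a) = alab T a"
    and h2: "\<And>v. v \<in> Nodes T \<Longrightarrow> nlab T' (f v) = nlab T v"
    using I unfolding path_iso_def by auto
  note DP = dtree_props[OF D]
  have inj: "inj_on f (Nodes T)" using bN by (rule bij_betw_imp_inj_on)
  have ge: "g e \<in> Arrows T'" using bij_betw_apply[OF bA e] .
  have uN: "asrc T e \<in> Nodes T" "atgt T e \<in> Nodes T" using DP(4,5) e by auto
  have fe: "asrc T' (g e) = f (asrc T e)" "atgt T' (g e) = f (atgt T e)" "alab T' (g e) = alab T e"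
    using h1[OF e] by auto
  have eqf: "f x = f y \<longleftrightarrow> x = y" if "x \<in> Nodes T" "y \<in> Nodes T" for x y
    using inj that unfolding inj_on_def by blast
  show ?thesis unfolding path_iso_def
  proof (intro conjI ballI)
    show "bij_betw f (Nodes (glue T e)) (Nodes (glue T' (g e)))"
      unfolding glue_simps fe by (rule bij_betw_DiffI[OF bN]) (use uN bij_betw_apply[OF bN uN(2)] in auto)
    show "bij_betw g (Arrows (glue T e)) (Arrows (glue T' (g e)))"
      unfolding glue_simps by (rule bij_betw_DiffI[OF bA]) (use e ge in auto)
    fix z assume z: "z \<in> Arrows (glue T e)"
    then have zA: "z \<in> Arrows T" by simp
    have zN: "asrc T z \<in> Nodes T" "atgt T z \<in> Nodes T" using DP(4,5) zA by auto
    show "asrc (glue T' (g e)) (g z) = f (asrc (glue T e) z)"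
      using h1[OF zA] fe eqf[OF zN(1) uN(2)] by simp
    show "atgt (glue T' (g e)) (g z) = f (atgt (glue T e) z)"
      using h1[OF zA] fe eqf[OF zN(2) uN(2)] by simp
    show "alab (glue T' (g e)) (g z) = alab (glue T e) z" using h1[OF zA] by simp
  next
    fix v assume v: "v \<in> Nodes (glue T e)"
    then have vN: "v \<in> Nodes T" by simp
    show "nlab (glue T' (g e)) (f v) = nlab (glue T e) v"
      unfolding glue_nlab'[OF D e] glue_nlab'[OF D' ge] fe
      using eqf[OF vN uN(1)] h2[OF vN] h2[OF uN(1)] h2[OF uN(2)] by simp
  qed
qed

lemma glue_all_facts:
  assumes hg: "higraph V E" and P: "is_path E T" and "set es \<subseteq> Arrows T" and "distinct es"
  shows "is_path E (glue_all T es) \<and> Arrows (glue_all T es) = Arrows T - set es"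
  using assms(2-)
proof (induction es arbitrary: T)
  case Nil then show ?case by simp
next
  case (Cons e es)
  have P': "is_path E (glue T e)" using path_glue[OF hg Cons.prems(1)] Cons.prems(2) by simp
  have "set es \<subseteq> Arrows (glue T e)" "distinct es" using Cons.prems(2,3) by auto
  then have "is_path E (glue_all (glue T e) es) \<and> Arrows (glue_all (glue T e) es) = Arrows (glue T e) - set es"
    using Cons.IH[OF P'] by blast
  then show ?case by auto
qed

lemma iso_glue_all:
  assumes hg: "higraph V E" and P: "is_path E T" and P': "is_path E T'" and I: "path_iso T T' f g"
    and "set es \<subseteq> Arrows T" and "distinct es"
  shows "path_iso (glue_all T es) (glue_all T' (map g es)) f g"
  using P P' I assms(5-)
proof (induction es arbitrary: T T')
  case Nil then show ?case by simp
next
  case (Cons e es)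
  have e: "e \<in> Arrows T" using Cons.prems(4) by simp
  have bA: "bij_betw g (Arrows T) (Arrows T')" using Cons.prems(3) unfolding path_iso_def by simp
  have ge: "g e \<in> Arrows T'" using bij_betw_apply[OF bA e] .
  have I1: "path_iso (glue T e) (glue T' (g e)) f g"
    by (rule iso_glue[OF Cons.prems(3) path_props(1)[OF Cons.prems(1)] path_props(1)[OF Cons.prems(2)] e])
  have "path_iso (glue_all (glue T e) es) (glue_all (glue T' (g e)) (map g es)) f g"
    by (rule Cons.IH[OF path_glue[OF hg Cons.prems(1) e] path_glue[OF hg Cons.prems(2) ge] I1])
      (use Cons.prems(4,5) in auto)
  then show ?case by simp
qed

lemma perm_move:
  assumes hg: "higraph V E" and P: "is_path E T"
    and "distinct (ys1 @ a # ys2)" "set (ys1 @ a # ys2) \<subseteq> Arrows T"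
  shows "\<exists>f. path_iso (glue_all T (a # ys1 @ ys2)) (glue_all T (ys1 @ a # ys2)) f id"
  using P assms(3,4)
proof (induction ys1 arbitrary: T)
  case Nil
  have "path_iso (glue_all T (a # [] @ ys2)) (glue_all T ([] @ a # ys2)) id id" using path_iso_id by simp
  then show ?case by blast
next
  case (Cons c ys1)
  have a: "a \<in> Arrows T" and c: "c \<in> Arrows T" and ac: "a \<noteq> c" using Cons.prems by auto
  obtain f1 where f1: "path_iso (glue (glue T a) c) (glue (glue T c) a) f1 id"
    using swap_glue[OF hg Cons.prems(1) a c ac] by blast
  have Pc: "is_path E (glue T c)" by (rule path_glue[OF hg Cons.prems(1) c])
  have Pac: "is_path E (glue (glue T a) c)" using path_glue[OF hg path_glue[OF hg Cons.prems(1) a]] c ac by simp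
  have Pca: "is_path E (glue (glue T c) a)" using path_glue[OF hg Pc] a ac by simp
  have "path_iso (glue_all (glue (glue T a) c) (ys1 @ ys2)) (glue_all (glue (glue T c) a) (map id (ys1 @ ys2))) f1 id"
    by (rule iso_glue_all[OF hg Pac Pca f1]) (use Cons.prems(2,3) in auto)
  then have i1: "path_iso (glue_all T (a # (c # ys1) @ ys2)) (glue_all (glue T c) (a # ys1 @ ys2)) f1 id" by simp
  have "distinct (ys1 @ a # ys2)" "set (ys1 @ a # ys2) \<subseteq> Arrows (glue T c)" using Cons.prems(2,3) by auto
  then obtain f2 where "path_iso (glue_all (glue T c) (a # ys1 @ ys2)) (glue_all (glue T c) (ys1 @ a # ys2)) f2 id"
    using Cons.IH[OF Pc] by blast
  then have "path_iso (glue_all T (a # (c # ys1) @ ys2)) (glue_all T ((c # ys1) @ a # ys2)) (f2 \<circ> f1) (id \<circ> id)"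
    using path_iso_comp[OF i1] by simp
  then have "path_iso (glue_all T (a # (c # ys1) @ ys2)) (glue_all T ((c # ys1) @ a # ys2)) (f2 \<circ> f1) id"
    by simp
  then show ?case by blast
qed

lemma perm_iso:
  assumes hg: "higraph V E" and P: "is_path E T"
    and "distinct xs" "distinct ys" "set xs = set ys" "set xs \<subseteq> Arrows T"
  shows "\<exists>f. path_iso (glue_all T xs) (glue_all T ys) f id"
  using P assms(3-)
proof (induction xs arbitrary: T ys)
  case Nil
  then have "ys = []" by simp
  then have "path_iso (glue_all T []) (glue_all T ys) id id" using path_iso_id by simp
  then show ?case by blast
next
  case (Cons a xs)
  have "a \<in> set ys" using Cons.prems by auto
  then obtain ys1 ys2 where ys: "ys = ys1 @ a # ys2" by (meson split_list)
  have a: "a \<in> Arrows T" using Cons.prems by auto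
  have Pa: "is_path E (glue T a)" by (rule path_glue[OF hg Cons.prems(1) a])
  have h: "distinct xs" "distinct (ys1 @ ys2)" "set xs = set (ys1 @ ys2)" "set xs \<subseteq> Arrows (glue T a)"
    using Cons.prems ys by auto
  obtain f1 where f1: "path_iso (glue_all (glue T a) xs) (glue_all (glue T a) (ys1 @ ys2)) f1 id"
    using Cons.IH[OF Pa h] by blast
  obtain f2 where f2: "path_iso (glue_all T (a # ys1 @ ys2)) (glue_all T (ys1 @ a # ys2)) f2 id"
    using perm_move[OF hg Cons.prems(1), of ys1 a ys2] Cons.prems ys by auto
  have "path_iso (glue_all T (a # xs)) (glue_all T ys) (f2 \<circ> f1) (id \<circ> id)"
    using path_iso_comp[OF _ f2] f1 ys by simp
  then have "path_iso (glue_all T (a # xs)) (glue_all T ys) (f2 \<circ> f1) id" by simp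
  then show ?case by blast
qed

lemma iso_props:
  assumes "path_iso T T' f g"
  shows "bij_betw f (Nodes T) (Nodes T')" "bij_betw g (Arrows T) (Arrows T')"
    "\<And>a. a \<in> Arrows T \<Longrightarrow> asrc T' (g a) = f (asrc T a)"
    "\<And>a. a \<in> Arrows T \<Longrightarrow> atgt T' (g a) = f (atgt T a)"
    "\<And>a. a \<in> Arrows T \<Longrightarrow> alab T' (g a) = alab T a"
    "\<And>v. v \<in> Nodes T \<Longrightarrow> nlab T' (f v) = nlab T v"
  using assms unfolding path_iso_def by auto

lemma fix_arrow:
  assumes P: "is_path E T" and I: "path_iso T T f g" and c: "c \<in> Arrows T"
    and fx: "f (asrc T c) = asrc T c \<or> f (atgt T c) = atgt T c"
  shows "g c = c \<and> f (asrc T c) = asrc T c \<and> f (atgt T c) = atgt T c"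
proof -
  note II = iso_props[OF I]
  note PP = path_props[OF P]
  have gc: "g c \<in> Arrows T" using bij_betw_apply[OF II(2) c] .
  have "g c = c"
  proof (rule ccontr)
    assume ne: "g c \<noteq> c"
    show False
    proof (cases "f (asrc T c) = asrc T c")
      case True
      then have "asrc T (g c) = asrc T c" using II(3)[OF c] by simp
      then show False using PP(4)[OF gc c ne] II(5)[OF c] by simp
    next
      case False
      then have "f (atgt T c) = atgt T c" using fx by simp
      then have "atgt T (g c) = atgt T c" using II(4)[OF c] by simp
      then show False using PP(5)[OF gc c ne] II(5)[OF c] by simp
    qed
  qed
  then show ?thesis using II(3,4)[OF c] by simp
qed

lemma propagate:
  assumes P: "is_path E T" and I: "path_iso T T f g" and v0: "v0 \<in> Nodes T" "f v0 = v0"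
  shows "\<forall>a\<in>Arrows T. g a = a"
proof -
  note PP = path_props[OF P]
  have cn: "conn T" by (rule dtree_conn[OF PP(1)])
  have allfix: "f y = y" if y: "y \<in> Nodes T" for y
  proof -
    have "(v0, y) \<in> (undir_rel T)\<^sup>*" using cn v0 y unfolding conn_def by simp
    then show ?thesis
    proof (induction rule: rtrancl_induct)
      case base then show ?case using v0 by simp
    next
      case (step y z)
      then obtain c where c: "c \<in> Arrows T" "(y = asrc T c \<and> z = atgt T c) \<or> (y = atgt T c \<and> z = asrc T c)"
        unfolding undir_rel_iff by blast
      then have "f (asrc T c) = asrc T c \<or> f (atgt T c) = atgt T c" using step.IH by auto
      then have "f (asrc T c) = asrc T c \<and> f (atgt T c) = atgt T c" using fix_arrow[OF P I c(1)] by blast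
      then show ?case using c(2) by (elim disjE conjE) simp_all
    qed
  qed
  show ?thesis
  proof
    fix a assume a: "a \<in> Arrows T"
    have "asrc T a \<in> Nodes T" using dtree_props(4)[OF PP(1) a] .
    then show "g a = a" using fix_arrow[OF P I a] allfix by blast
  qed
qed

lemma chain_fix:
  assumes P: "is_path E T" and I: "path_iso T T f g" and K: "\<forall>a\<in>Arrows T. alab T a = K"
  shows "\<exists>v0\<in>Nodes T. f v0 = v0"
proof -
  note II = iso_props[OF I]
  note PP = path_props[OF P]
  note DP = dtree_props[OF PP(1)]
  have inj: "inj_on (atgt T) (Arrows T)"
    unfolding inj_on_def using PP(5) K by metis
  have sub: "atgt T ` Arrows T \<subseteq> Nodes T" using DP(5) by auto
  have "card (Nodes T - atgt T ` Arrows T) = 1"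
    using card_Diff_subset[OF finite_subset[OF sub DP(1)] sub] card_image[OF inj] DP(6) by simp
  then obtain v0 where v0: "Nodes T - atgt T ` Arrows T = {v0}" by (rule card_1_singletonE)
  have v0N: "v0 \<in> Nodes T" using v0 by auto
  have fv0: "f v0 \<in> Nodes T" using bij_betw_apply[OF II(1) v0N] .
  have "f v0 \<notin> atgt T ` Arrows T"
  proof
    assume "f v0 \<in> atgt T ` Arrows T"
    then obtain a' where a': "a' \<in> Arrows T" "f v0 = atgt T a'" by auto
    have "a' \<in> g ` Arrows T" using a'(1) II(2) unfolding bij_betw_def by simp
    then obtain b where b: "b \<in> Arrows T" "a' = g b" by auto
    have "f (atgt T b) = f v0" using II(4)[OF b(1)] a'(2) b(2) by simp
    moreover have "inj_on f (Nodes T)" using II(1) by (rule bij_betw_imp_inj_on)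
    ultimately have "atgt T b = v0" using DP(5)[OF b(1)] v0N unfolding inj_on_def by blast
    then show False using v0 b(1) by auto
  qed
  then have "f v0 = v0" using v0 fv0 by auto
  then show ?thesis using v0N by blast
qed

lemma auto_trivial:
  assumes hg: "higraph V E" and P: "is_path E T" and I: "path_iso T T f g"
  shows "\<forall>a\<in>Arrows T. g a = a"
  using P I
proof (induction "card (Arrows T)" arbitrary: T f g rule: less_induct)
  case less
  note PP = path_props[OF less.prems(1)]
  note DP = dtree_props[OF PP(1)]
  note II = iso_props[OF less.prems(2)]
  show ?case
  proof (cases "Arrows T = {}")
    case True then show ?thesis by simp
  next
    case False
    then obtain e where e: "e \<in> Arrows T" by blast
    define Oset where "Oset = {a \<in> Arrows T. alab T a = alab T e}"
    show ?thesis
    proof (cases "Oset = Arrows T")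
      case True
      then have "\<forall>a\<in>Arrows T. alab T a = alab T e" unfolding Oset_def by auto
      then obtain v0 where "v0 \<in> Nodes T" "f v0 = v0" using chain_fix[OF less.prems] by blast
      then show ?thesis using propagate[OF less.prems] by blast
    next
      case False
      have Osub: "Oset \<subseteq> Arrows T" unfolding Oset_def by auto
      then have finO: "finite Oset" using DP(3) finite_subset by blast
      obtain os where os: "set os = Oset" "distinct os" using finite_distinct_list[OF finO] by blast
      have gO: "g ` Oset = Oset"
      proof (rule endo_inj_surj[OF finO])
        show "g ` Oset \<subseteq> Oset"
        proof
          fix z assume "z \<in> g ` Oset"
          then obtain a where a: "a \<in> Oset" "z = g a" by auto
          then have "a \<in> Arrows T" unfolding Oset_def by simp
          then show "z \<in> Oset" using a II(5) bij_betw_apply[OF II(2)] unfolding Oset_def by auto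
        qed
        show "inj_on g Oset" using inj_on_subset[OF bij_betw_imp_inj_on[OF II(2)] Osub] .
      qed
      have dm: "distinct (map g os)"
        using os inj_on_subset[OF bij_betw_imp_inj_on[OF II(2)] Osub] by (simp add: distinct_map)
      have sm: "set (map g os) = set os" using gO os by simp
      have GF: "is_path E (glue_all T os) \<and> Arrows (glue_all T os) = Arrows T - Oset"
        using glue_all_facts[OF hg less.prems(1)] os Osub by auto
      have I1: "path_iso (glue_all T os) (glue_all T (map g os)) f g"
        by (rule iso_glue_all[OF hg less.prems(1) less.prems(1) less.prems(2)]) (use os Osub in auto)
      obtain f' where f': "path_iso (glue_all T (map g os)) (glue_all T os) f' id"
        using perm_iso[OF hg less.prems(1) dm os(2) sm] sm os Osub by auto
      have I2: "path_iso (glue_all T os) (glue_all T os) (f' \<circ> f) g"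
        using path_iso_comp[OF I1 f'] by simp
      have "card (Arrows (glue_all T os)) < card (Arrows T)"
        using GF e DP(3) unfolding Oset_def by (auto intro!: psubset_card_mono)
      then have fixd: "\<forall>a\<in>Arrows (glue_all T os). g a = a"
        using less.hyps GF I2 by blast
      obtain c where c: "c \<in> Arrows T" "c \<notin> Oset" using False Osub by blast
      then have "g c = c" using fixd GF by simp
      then have "f (asrc T c) = asrc T c" using II(3)[OF c(1)] by simp
      moreover have "asrc T c \<in> Nodes T" using DP(4)[OF c(1)] .
      ultimately show ?thesis using propagate[OF less.prems] by blast
    qed
  qed
qed

lemma glue_pi_id: "glue_pi T e = id"
  by (rule ext) (simp add: glue_pi_def)

lemma tuple_to_gseq_id: "tuple_to_gseq T es = es"
  by (induction es arbitrary: T) (simp_all add: glue_pi_id)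

lemma is_gseq_iff: "is_gseq T es \<longleftrightarrow> set es \<subseteq> Arrows T \<and> distinct es"
  by (induction es arbitrary: T) auto

lemma gseq_iso_refl: "gseq_iso T es T es"
proof (induction es arbitrary: T)
  case Nil
  have "path_iso T T id id" by (rule path_iso_id)
  then show ?case unfolding gseq_iso.simps(1) isomorphic_def by blast
next
  case (Cons e es)
  have "path_iso T T id id \<and> id e = e" using path_iso_id by simp
  then have "\<exists>f g. path_iso T T f g \<and> g e = e" by blast
  then show ?case using Cons.IH by simp
qed

lemma gseq_iso_eq:
  assumes hg: "higraph V E"
  shows "is_path E T \<Longrightarrow> is_gseq T es \<Longrightarrow> gseq_iso T es T es' \<Longrightarrow> es = es'"
proof (induction es arbitrary: T es')
  case Nil then show ?case by (cases es') auto
next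
  case (Cons e es)
  then obtain e' es2 where es': "es' = e' # es2" by (cases es') auto
  have e: "e \<in> Arrows T" using Cons.prems(2) by simp
  obtain f g where fg: "path_iso T T f g" "g e = e'" using Cons.prems(3) es' by auto
  have "g e = e" using auto_trivial[OF hg Cons.prems(1) fg(1)] e by blast
  then have ee: "e' = e" using fg(2) by simp
  have "es = es2"
    using Cons.IH[OF path_glue[OF hg Cons.prems(1) e]] Cons.prems(2,3) es' ee by simp
  then show ?case using es' ee by simp
qed

theorem proposition4p17:
  fixes V :: "'v set" and E :: "'v hedge set" and \<rho>1 :: "('v,'n,'a) hpath" and k :: nat
  assumes "higraph V E" and "is_path E \<rho>1" and "k \<ge> 1"
  shows "bij_betw (\<lambda>es. gseq_rel \<rho>1 `` {tuple_to_gseq \<rho>1 es})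
           (break_tuples \<rho>1 k) (gluing_sequences \<rho>1 k)
       \<and> (\<forall>es\<in>break_tuples \<rho>1 k. \<forall>p. p permutes {..<k} \<longrightarrow>
            isomorphic (glue_all \<rho>1 (tuple_to_gseq \<rho>1 es))
                       (glue_all \<rho>1 (tuple_to_gseq \<rho>1 (map (\<lambda>i. es ! p i) [0..<k]))))"
proof
  define S where "S = break_tuples \<rho>1 k"
  define r where "r = gseq_rel \<rho>1"
  have S: "S = {es. is_gseq \<rho>1 es \<and> length es = k}"
    unfolding S_def break_tuples_def is_gseq_iff by auto
  have GS: "gluing_sequences \<rho>1 k = S // r" unfolding gluing_sequences_def S r_def ..
  have refl: "(x, x) \<in> r" for x unfolding r_def gseq_rel_def using gseq_iso_refl by simp
  have inj: "inj_on (\<lambda>es. r `` {es}) S"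
  proof (rule inj_onI)
    fix x y assume x: "x \<in> S" and y: "y \<in> S" and eq: "r `` {x} = r `` {y}"
    have "x \<in> r `` {x}" using refl by simp
    then have "(y, x) \<in> r" using eq by simp
    then have "gseq_iso \<rho>1 y \<rho>1 x" unfolding r_def gseq_rel_def by simp
    moreover have "is_gseq \<rho>1 y" using y S by simp
    ultimately show "x = y" using gseq_iso_eq[OF assms(1) assms(2)] by metis
  qed
  show "bij_betw (\<lambda>es. gseq_rel \<rho>1 `` {tuple_to_gseq \<rho>1 es}) (break_tuples \<rho>1 k) (gluing_sequences \<rho>1 k)"
    unfolding tuple_to_gseq_id GS S_def[symmetric] r_def[symmetric] bij_betw_def
    using inj by (auto simp: quotient_def)
next
  show "\<forall>es\<in>break_tuples \<rho>1 k. \<forall>p. p permutes {..<k} \<longrightarrow>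
            isomorphic (glue_all \<rho>1 (tuple_to_gseq \<rho>1 es))
                       (glue_all \<rho>1 (tuple_to_gseq \<rho>1 (map (\<lambda>i. es ! p i) [0..<k])))"
  proof (intro ballI allI impI)
    fix es p assume es: "es \<in> break_tuples \<rho>1 k" and p: "p permutes {..<k}"
    have es': "set es \<subseteq> Arrows \<rho>1" "distinct es" "length es = k" using es unfolding break_tuples_def by auto
    have pl: "map (\<lambda>i. es ! p i) [0..<k] = permute_list p es" unfolding permute_list_def es'(3) ..
    have ms: "mset (permute_list p es) = mset es" using mset_permute_list[of p es] p es'(3) by simp
    have d: "distinct (permute_list p es)" using mset_eq_imp_distinct_iff[OF ms] es'(2) by simp
    have st: "set es = set (permute_list p es)" using ms by (metis set_mset_mset)
    obtain f where "path_iso (glue_all \<rho>1 es) (glue_all \<rho>1 (permute_list p es)) f id"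
      using perm_iso[OF assms(1,2) es'(2) d st es'(1)] by blast
    then show "isomorphic (glue_all \<rho>1 (tuple_to_gseq \<rho>1 es))
                       (glue_all \<rho>1 (tuple_to_gseq \<rho>1 (map (\<lambda>i. es ! p i) [0..<k])))"
      unfolding tuple_to_gseq_id pl isomorphic_def by blast
  qed
qed

end
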